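(* Let $n \geq 2$ be a power of 2. Then $\mathsf{QNAADT}(\mathsf{ADDR}_n) = \Theta(n)$.
   Context: $\mathsf{ADDR}_n:\{0,1\}^{\log n+n}\to\{0,1\}$ is $\mathsf{ADDR}_n(x,y)=y_{\mathsf{bin}(x)}$ for $x\in\{0,1\}^{\log n}$, $y\in\{0,1\}^n$, where $\mathsf{bin}(x)\in[n]$ is the integer whose binary representation is $x$. $\mathsf{AND}_S(z)=\prod_{i\in S}z_i$. A quantum non-adaptive AND decision tree of cost $c$ for a function on $m$ bits works on $|S_1,\dots,S_c\rangle|b\rangle|w\rangle$ with $S_j\subseteq[m]$, $b\in\{0,1\}^c$, arbitrary workspace; it starts from an input-independent state $|\psi\rangle$, applies once the oracle $O_z$ mapping $|S_1,\dots,S_c\rangle|b_1,\dots,b_c\rangle|w\rangle$ to $|S_1,\dots,S_c\rangle|b_1\oplus\mathsf{AND}_{S_1}(z),\dots,b_c\oplus\mathsf{AND}_{S_c}(z)\rangle|w\rangle$, and accepts with probability $\|\Pi O_z|\psi\rangle\|^2$ for a fixed projector $\Pi$; $\mathsf{QNAADT}(f)$ is the minimum cost of one computing $f$ with success probability at least $2/3$ on every input. *)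

theory Defs
  imports Complex_Main
begin

(* Inputs on m bits are bool lists of length m, bit i is z ! i (0-indexed). *)
definition AND_S :: "nat set \<Rightarrow> bool list \<Rightarrow> bool" where
  "AND_S S z = (\<forall>i\<in>S. z ! i)"

(* computational basis |S_1..S_c>|b_1..b_c>|w>, workspace basis {0..<d} *)
type_synonym qbasis = "nat set list \<times> bool list \<times> nat"

definition qbasis_set :: "nat \<Rightarrow> nat \<Rightarrow> nat \<Rightarrow> qbasis set" where
  "qbasis_set m c d = {(Ss, b, w). length Ss = c \<and> (\<forall>S\<in>set Ss. S \<subseteq> {..<m})
                                 \<and> length b = c \<and> w < d}"

(* O_z |S,b,w> = |S, b xor AND_S(z), w>, so (O_z psi)(S,b,w) = psi(S, b xor AND_S(z), w) *)
definition query_op :: "bool list \<Rightarrow> (qbasis \<Rightarrow> complex) \<Rightarrow> qbasis \<Rightarrow> complex" where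
  "query_op z \<psi> = (\<lambda>(Ss, b, w). \<psi> (Ss, map2 (\<noteq>) b (map (\<lambda>S. AND_S S z) Ss), w))"

definition apply_op :: "qbasis set \<Rightarrow> (qbasis \<Rightarrow> qbasis \<Rightarrow> complex) \<Rightarrow> (qbasis \<Rightarrow> complex) \<Rightarrow> qbasis \<Rightarrow> complex" where
  "apply_op B P \<psi> = (\<lambda>x. \<Sum>y\<in>B. P x y * \<psi> y)"

definition is_projector :: "qbasis set \<Rightarrow> (qbasis \<Rightarrow> qbasis \<Rightarrow> complex) \<Rightarrow> bool" where
  "is_projector B P = ((\<forall>x\<in>B. \<forall>y\<in>B. P x y = cnj (P y x)) \<and>
                       (\<forall>x\<in>B. \<forall>y\<in>B. (\<Sum>k\<in>B. P x k * P k y) = P x y))"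

definition sqnorm :: "qbasis set \<Rightarrow> (qbasis \<Rightarrow> complex) \<Rightarrow> real" where
  "sqnorm B \<psi> = (\<Sum>x\<in>B. (cmod (\<psi> x))\<^sup>2)"

definition accept_prob :: "nat \<Rightarrow> nat \<Rightarrow> nat \<Rightarrow> (qbasis \<Rightarrow> complex) \<Rightarrow> (qbasis \<Rightarrow> qbasis \<Rightarrow> complex)
                            \<Rightarrow> bool list \<Rightarrow> real" where
  "accept_prob m c d \<psi> P z =
     sqnorm (qbasis_set m c d) (apply_op (qbasis_set m c d) P (query_op z \<psi>))"

(* there is a quantum non-adaptive AND decision tree of cost c computing f on m bits
   with success probability >= 2/3 on every input *)
definition qnaadt_computes :: "nat \<Rightarrow> (bool list \<Rightarrow> bool) \<Rightarrow> nat \<Rightarrow> bool" where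
  "qnaadt_computes m f c = (\<exists>d \<psi> P.
      sqnorm (qbasis_set m c d) \<psi> = 1 \<and> is_projector (qbasis_set m c d) P \<and>
      (\<forall>z. length z = m \<longrightarrow>
         (if f z then accept_prob m c d \<psi> P z \<ge> 2/3
                 else 1 - accept_prob m c d \<psi> P z \<ge> 2/3)))"

definition QNAADT :: "nat \<Rightarrow> (bool list \<Rightarrow> bool) \<Rightarrow> nat" where
  "QNAADT m f = (LEAST c. qnaadt_computes m f c)"

(* bin: integer with binary representation xs, most significant bit first; value in {0..<2^length xs} *)
definition bin :: "bool list \<Rightarrow> nat" where
  "bin xs = foldl (\<lambda>a bit. 2 * a + of_bool bit) 0 xs"

(* ADDR_n for n = 2^k on k + n bits: x = first k bits, y = last n bits, output y_{bin x} (0-indexed) *)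
definition ADDR :: "nat \<Rightarrow> bool list \<Rightarrow> bool" where
  "ADDR k z = (drop k z) ! bin (take k z)"

end

theory Submission
  imports Defs "HOL-Analysis.L2_Norm"
begin

definition NN :: "qbasis set \<Rightarrow> (qbasis \<Rightarrow> complex) \<Rightarrow> real" where
  "NN B u = L2_set (\<lambda>x. cmod (u x)) B"

lemma sqnorm_NN: "sqnorm B u = (NN B u)\<^sup>2"
  unfolding sqnorm_def NN_def L2_set_def by (simp add: sum_nonneg)

lemma cmod_sq_Re: "(cmod z)\<^sup>2 = Re (cnj z * z)"
  by (metis Re_complex_of_real complex_norm_square mult.commute of_real_power)

lemma inner_eq:
  assumes fin: "finite B" and pr: "is_projector B P"
  shows "(\<Sum>x\<in>B. cnj (apply_op B P w x) * apply_op B P w x)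
       = (\<Sum>k\<in>B. cnj (w k) * apply_op B P w k)"
proof -
  define v where "v = apply_op B P w"
  have herm: "\<And>x y. x \<in> B \<Longrightarrow> y \<in> B \<Longrightarrow> cnj (P x y) = P y x"
    using pr unfolding is_projector_def by (metis complex_cnj_cnj)
  have idem: "\<And>x y. x \<in> B \<Longrightarrow> y \<in> B \<Longrightarrow> (\<Sum>k\<in>B. P x k * P k y) = P x y"
    using pr unfolding is_projector_def by blast
  have "(\<Sum>x\<in>B. cnj (v x) * v x) = (\<Sum>x\<in>B. \<Sum>y\<in>B. cnj (v x) * P x y * w y)"
    unfolding v_def apply_op_def by (simp add: sum_distrib_left mult.assoc)
  also have "\<dots> = (\<Sum>y\<in>B. (\<Sum>x\<in>B. cnj (v x) * P x y) * w y)"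
    by (subst sum.swap) (simp add: sum_distrib_right)
  also have "\<dots> = (\<Sum>y\<in>B. (\<Sum>k\<in>B. cnj (w k) * P k y) * w y)"
  proof (rule sum.cong[OF refl])
    fix y assume y: "y \<in> B"
    have c: "cnj (v x) = (\<Sum>k\<in>B. cnj (w k) * P k x)" if x: "x \<in> B" for x
    proof -
      have "cnj (v x) = (\<Sum>k\<in>B. cnj (P x k) * cnj (w k))"
        unfolding v_def apply_op_def by (simp add: cnj_sum)
      also have "\<dots> = (\<Sum>k\<in>B. cnj (w k) * P k x)"
        by (rule sum.cong[OF refl]) (simp add: herm x mult.commute)
      finally show ?thesis .
    qed
    have "(\<Sum>x\<in>B. cnj (v x) * P x y) = (\<Sum>x\<in>B. (\<Sum>k\<in>B. cnj (w k) * P k x) * P x y)"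
      by (rule sum.cong[OF refl]) (simp add: c)
    also have "\<dots> = (\<Sum>x\<in>B. \<Sum>k\<in>B. cnj (w k) * (P k x * P x y))"
      by (simp add: sum_distrib_right mult.assoc)
    also have "\<dots> = (\<Sum>k\<in>B. cnj (w k) * (\<Sum>x\<in>B. P k x * P x y))"
      by (subst sum.swap) (simp add: sum_distrib_left)
    also have "\<dots> = (\<Sum>k\<in>B. cnj (w k) * P k y)"
      using idem y by simp
    finally show "(\<Sum>x\<in>B. cnj (v x) * P x y) * w y = (\<Sum>k\<in>B. cnj (w k) * P k y) * w y"
      by simp
  qed
  also have "\<dots> = (\<Sum>k\<in>B. cnj (w k) * v k)"
  proof -
    have "(\<Sum>y\<in>B. (\<Sum>k\<in>B. cnj (w k) * P k y) * w y) = (\<Sum>y\<in>B. \<Sum>k\<in>B. cnj (w k) * (P k y * w y))"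
      by (simp add: sum_distrib_right mult.assoc)
    also have "\<dots> = (\<Sum>k\<in>B. \<Sum>y\<in>B. cnj (w k) * (P k y * w y))"
      by (rule sum.swap)
    also have "\<dots> = (\<Sum>k\<in>B. cnj (w k) * (\<Sum>y\<in>B. P k y * w y))"
      by (simp add: sum_distrib_left)
    finally show ?thesis by (simp add: v_def apply_op_def)
  qed
  finally show ?thesis unfolding v_def .
qed

lemma proj_contract:
  assumes fin: "finite B" and pr: "is_projector B P"
  shows "NN B (apply_op B P w) \<le> NN B w"
proof -
  define v where "v = apply_op B P w"
  have "(NN B v)\<^sup>2 = (\<Sum>x\<in>B. (cmod (v x))\<^sup>2)"
    using sqnorm_NN[of B v] unfolding sqnorm_def by simp
  also have "\<dots> = Re (\<Sum>x\<in>B. cnj (v x) * v x)"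
    by (simp add: Re_sum cmod_sq_Re)
  also have "\<dots> = Re (\<Sum>k\<in>B. cnj (w k) * v k)"
    using inner_eq[OF fin pr, of w] unfolding v_def by simp
  also have "\<dots> \<le> cmod (\<Sum>k\<in>B. cnj (w k) * v k)"
    by (rule complex_Re_le_cmod)
  also have "\<dots> \<le> (\<Sum>k\<in>B. cmod (cnj (w k) * v k))"
    by (rule norm_sum)
  also have "\<dots> = (\<Sum>k\<in>B. \<bar>cmod (w k)\<bar> * \<bar>cmod (v k)\<bar>)"
    by (simp add: norm_mult)
  also have "\<dots> \<le> NN B w * NN B v"
    unfolding NN_def by (rule L2_set_mult_ineq)
  finally have h: "(NN B v)\<^sup>2 \<le> NN B w * NN B v" .
  have nv: "0 \<le> NN B v" unfolding NN_def by simp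
  have "NN B v \<le> NN B w"
  proof (cases "NN B v = 0")
    case True then show ?thesis unfolding NN_def by simp
  next
    case False
    then have pos: "0 < NN B v" using nv by simp
    have "NN B v * NN B v \<le> NN B w * NN B v" using h by (simp add: power2_eq_square)
    then show ?thesis using pos by (rule mult_right_le_imp_le)
  qed
  then show ?thesis unfolding v_def .
qed

lemma NN_triangle: "NN B (\<lambda>x. u x + v x) \<le> NN B u + NN B v"
proof -
  have "NN B (\<lambda>x. u x + v x) \<le> L2_set (\<lambda>x. cmod (u x) + cmod (v x)) B"
    unfolding NN_def by (rule L2_set_mono) (auto simp: norm_triangle_ineq)
  also have "\<dots> \<le> NN B u + NN B v"
    unfolding NN_def by (rule L2_set_triangle_ineq)
  finally show ?thesis .
qed

lemma apply_op_diff: "apply_op B P u x - apply_op B P v x = apply_op B P (\<lambda>y. u y - v y) x"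
  unfolding apply_op_def by (simp add: sum_subtractf right_diff_distrib)

lemma map2_inv: "length b = length g \<Longrightarrow> map2 (\<lambda>x y. x = (\<not> y)) (map2 (\<lambda>x y. x = (\<not> y)) b g) g = b"
proof (induction b arbitrary: g)
  case Nil then show ?case by simp
next
  case (Cons x b) then show ?case by (cases g) auto
qed

lemma finite_qbasis: "finite (qbasis_set m c d)"
proof -
  have "qbasis_set m c d \<subseteq> {Ss. set Ss \<subseteq> Pow {..<m} \<and> length Ss = c}
      \<times> {b. set b \<subseteq> (UNIV::bool set) \<and> length b = c} \<times> {..<d}"
    unfolding qbasis_set_def by auto
  moreover have "finite ({Ss. set Ss \<subseteq> Pow {..<m} \<and> length Ss = c}
      \<times> {b. set b \<subseteq> (UNIV::bool set) \<and> length b = c} \<times> {..<d})"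
    by (intro finite_cartesian_product finite_lists_length_eq) auto
  ultimately show ?thesis by (rule finite_subset)
qed

definition sig :: "bool list \<Rightarrow> qbasis \<Rightarrow> qbasis" where
  "sig z = (\<lambda>(Ss, b, w). (Ss, map2 (\<noteq>) b (map (\<lambda>S. AND_S S z) Ss), w))"

lemma query_op_sig: "query_op z \<psi> x = \<psi> (sig z x)"
  unfolding query_op_def sig_def by (cases x) auto

lemma sig_in: "x \<in> qbasis_set m c d \<Longrightarrow> sig z x \<in> qbasis_set m c d"
  unfolding qbasis_set_def sig_def by auto

lemma sig_sig: "x \<in> qbasis_set m c d \<Longrightarrow> sig z (sig z x) = x"
  unfolding qbasis_set_def sig_def by (auto simp: map2_inv)

lemma fst_sig: "fst (sig z x) = fst x"
  unfolding sig_def by (cases x) auto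

lemma reindex_query:
  "(\<Sum>x\<in>qbasis_set m c d. F (fst x) * (cmod (query_op z \<psi> x))\<^sup>2)
   = (\<Sum>x\<in>qbasis_set m c d. F (fst x) * (cmod (\<psi> x))\<^sup>2)"
  unfolding query_op_sig
  by (rule sum.reindex_bij_witness[where i="sig z" and j="sig z"])
     (auto simp: sig_in sig_sig fst_sig)

fun enc :: "nat \<Rightarrow> nat \<Rightarrow> bool list" where
  "enc 0 a = []"
| "enc (Suc k) a = enc k (a div 2) @ [odd a]"

lemma length_enc [simp]: "length (enc k a) = k"
  by (induction k arbitrary: a) auto

lemma bin_snoc: "bin (xs @ [x]) = 2 * bin xs + of_bool x"
  unfolding bin_def by simp

lemma bin_enc: "bin (enc k a) = a mod 2^k"
proof (induction k arbitrary: a)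
  case 0 then show ?case by (simp add: bin_def)
next
  case (Suc k)
  have "a mod (2 * 2^k) = 2 * (a div 2 mod 2^k) + a mod 2"
    by (rule mod_mult2_eq)
  moreover have "of_bool (odd a) = a mod 2"
    by (cases "even a") (simp_all add: odd_iff_mod_2_eq_one)
  moreover have "bin (enc (Suc k) a) = 2 * bin (enc k (a div 2)) + of_bool (odd a)"
    by (simp add: bin_snoc)
  ultimately show ?case using Suc by simp
qed

lemma hitI:
  fixes k n a :: nat and S :: "nat set"
  assumes a: "a < n" and S: "S \<subseteq> {..<k+n}"
    and ne: "AND_S S (enc k a @ map (\<lambda>i. i = a) [0..<n]) \<noteq> AND_S S (enc k a @ replicate n False)"
  shows "Max S - k = a"
proof -
  define za where "za = enc k a @ map (\<lambda>i. i = a) [0..<n]"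
  define zb where "zb = enc k a @ replicate n False"
  have low: "za ! i = zb ! i" if "i < k" for i
    using that unfolding za_def zb_def by (simp add: nth_append)
  have hza: "za ! i = (i - k = a)" if "k \<le> i" "i < k + n" for i
  proof -
    have "i - k < n" using that by linarith
    then show ?thesis using that unfolding za_def by (simp add: nth_append)
  qed
  have hzb: "\<not> zb ! i" if "k \<le> i" "i < k + n" for i
    using that unfolding zb_def by (simp add: nth_append)
  have ne': "AND_S S za \<noteq> AND_S S zb" using ne unfolding za_def zb_def .
  have "\<exists>j\<in>S. k \<le> j"
  proof (rule ccontr)
    assume "\<not> (\<exists>j\<in>S. k \<le> j)"
    then have "\<forall>i\<in>S. i < k" by auto
    then have "AND_S S za = AND_S S zb" unfolding AND_S_def using low by auto
    with ne' show False by simp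
  qed
  then obtain j where j: "j \<in> S" "k \<le> j" by blast
  have jm: "j < k + n" using j S by auto
  have "\<not> AND_S S zb" unfolding AND_S_def using j jm hzb by auto
  with ne' have all: "\<forall>i\<in>S. za ! i" unfolding AND_S_def by auto
  have jeq: "j = k + a" using all j jm hza by fastforce
  have le: "\<forall>i\<in>S. i \<le> k + a"
  proof
    fix i assume i: "i \<in> S"
    show "i \<le> k + a"
    proof (cases "i < k")
      case True then show ?thesis by simp
    next
      case False
      then have "za ! i = (i - k = a)" using i S hza by auto
      with all i False show ?thesis by auto
    qed
  qed
  have fin: "finite S" using S finite_subset by blast
  have "Max S = k + a"
    by (rule Max_eqI[OF fin]) (use le j jeq in auto)
  then show ?thesis by simp
qed

lemma arith_final:
  fixes A V D W :: real
  assumes "0 \<le> A" "0 \<le> V" "0 \<le> D" "2/3 \<le> A\<^sup>2" "V\<^sup>2 \<le> 1/3" "A \<le> V + D" "D\<^sup>2 \<le> 4 * W"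
  shows "1/100 \<le> W"
proof (rule ccontr)
  assume "\<not> 1/100 \<le> W"
  then have W: "W < 1/100" by simp
  have D2: "D\<^sup>2 < 1/25" using assms(7) W by linarith
  have d: "D < 1/5"
  proof (rule ccontr)
    assume "\<not> D < 1/5"
    then have "1/5 \<le> D" by simp
    then have "(1/5)\<^sup>2 \<le> D\<^sup>2" by (rule power_mono) simp
    then show False using D2 by (simp add: power_divide)
  qed
  have v: "V < 29/50"
  proof (rule ccontr)
    assume "\<not> V < 29/50"
    then have "29/50 \<le> V" by simp
    then have "(29/50)\<^sup>2 \<le> V\<^sup>2" by (rule power_mono) simp
    then show False using assms(5) by (simp add: power_divide)
  qed
  have "A < 39/50" using d v assms(6) by linarith
  then have "A\<^sup>2 < (39/50)\<^sup>2" using assms(1) by (rule power_strict_mono) simp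
  then show False using assms(4) by (simp add: power_divide)
qed

lemma sq_diff_le: "(cmod (p - q))\<^sup>2 \<le> 2 * (cmod p)\<^sup>2 + 2 * (cmod q)\<^sup>2"
proof -
  have "cmod (p - q) \<le> cmod p + cmod q" by (rule norm_triangle_ineq4)
  then have "(cmod (p - q))\<^sup>2 \<le> (cmod p + cmod q)\<^sup>2"
    by (simp add: power_mono)
  also have "\<dots> \<le> 2 * (cmod p)\<^sup>2 + 2 * (cmod q)\<^sup>2"
  proof -
    have "0 \<le> (cmod p - cmod q)\<^sup>2" by simp
    then show ?thesis unfolding power2_sum power2_diff by linarith
  qed
  finally show ?thesis .
qed

lemma lower:
  fixes k c :: nat
  assumes comp: "qnaadt_computes (k + 2^k) (ADDR k) c"
  shows "real (2^k) \<le> 100 * real c"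
proof -
  define n where "n = (2::nat)^k"
  define m where "m = k + n"
  from comp obtain d \<psi> P where nrm: "sqnorm (qbasis_set m c d) \<psi> = 1"
    and pr: "is_projector (qbasis_set m c d) P"
    and corr: "\<forall>z. length z = m \<longrightarrow>
         (if ADDR k z then accept_prob m c d \<psi> P z \<ge> 2/3
                 else 1 - accept_prob m c d \<psi> P z \<ge> 2/3)"
    unfolding qnaadt_computes_def m_def n_def by blast
  define B where "B = qbasis_set m c d"
  have finB: "finite B" unfolding B_def by (rule finite_qbasis)
  define za where "za a = enc k a @ map (\<lambda>i. i = a) [0..<n]" for a
  define zb where "zb a = enc k a @ replicate n False" for a
  define G where "G z Ss = map (\<lambda>S. AND_S S z) Ss" for z Ss
  define hit where "hit a Ss = (G (za a) Ss \<noteq> G (zb a) Ss)" for a Ss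
  define W where "W a = (\<Sum>x\<in>B. (if hit a (fst x) then 1 else 0) * (cmod (\<psi> x))\<^sup>2)" for a

  have card_hit: "card {a\<in>{..<n}. hit a (fst x)} \<le> c" if x: "x \<in> B" for x
  proof -
    obtain Ss b w where xe: "x = (Ss, b, w)" by (cases x)
    have Ss: "length Ss = c" "\<forall>S\<in>set Ss. S \<subseteq> {..<k+n}"
      using x unfolding xe B_def qbasis_set_def m_def by auto
    have "{a\<in>{..<n}. hit a (fst x)} \<subseteq> (\<lambda>S. Max S - k) ` set Ss"
    proof
      fix a assume "a \<in> {a\<in>{..<n}. hit a (fst x)}"
      then have a: "a < n" and h: "hit a Ss" unfolding xe by auto
      from h obtain S where S: "S \<in> set Ss" "AND_S S (za a) \<noteq> AND_S S (zb a)"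
        unfolding hit_def G_def by (auto simp: map_eq_conv)
      have "Max S - k = a"
        using hitI[OF a, of S k] S Ss unfolding za_def zb_def by auto
      then show "a \<in> (\<lambda>S. Max S - k) ` set Ss" using S by force
    qed
    then have "card {a\<in>{..<n}. hit a (fst x)} \<le> card ((\<lambda>S. Max S - k) ` set Ss)"
      by (intro card_mono) auto
    also have "\<dots> \<le> card (set Ss)" by (rule card_image_le) simp
    also have "\<dots> \<le> length Ss" by (rule card_length)
    finally show ?thesis using Ss by simp
  qed

  have Wsum: "(\<Sum>a<n. W a) \<le> real c"
  proof -
    have "(\<Sum>a<n. W a) = (\<Sum>x\<in>B. (\<Sum>a<n. (if hit a (fst x) then 1 else 0)) * (cmod (\<psi> x))\<^sup>2)"
      unfolding W_def by (subst sum.swap) (simp add: sum_distrib_right)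
    also have "\<dots> = (\<Sum>x\<in>B. real (card {a\<in>{..<n}. hit a (fst x)}) * (cmod (\<psi> x))\<^sup>2)"
    proof (rule sum.cong[OF refl])
      fix x :: qbasis
      have "(\<Sum>a<n. (if hit a (fst x) then 1 else 0 :: real)) = real (card {a\<in>{..<n}. hit a (fst x)})"
        by (simp add: sum.If_cases Int_def)
      then show "(\<Sum>a<n. (if hit a (fst x) then 1 else 0)) * (cmod (\<psi> x))\<^sup>2
          = real (card {a\<in>{..<n}. hit a (fst x)}) * (cmod (\<psi> x))\<^sup>2" by simp
    qed
    also have "\<dots> \<le> (\<Sum>x\<in>B. real c * (cmod (\<psi> x))\<^sup>2)"
    proof (rule sum_mono)
      fix x assume x: "x \<in> B"
      show "real (card {a\<in>{..<n}. hit a (fst x)}) * (cmod (\<psi> x))\<^sup>2 \<le> real c * (cmod (\<psi> x))\<^sup>2"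
        by (rule mult_right_mono) (use card_hit[OF x] in simp_all)
    qed
    also have "\<dots> = real c * sqnorm B \<psi>"
      unfolding sqnorm_def by (simp add: sum_distrib_left)
    also have "\<dots> = real c" using nrm unfolding B_def by simp
    finally show ?thesis .
  qed

  have Wlow: "1/100 \<le> W a" if a: "a < n" for a
  proof -
    define u where "u = query_op (za a) \<psi>"
    define v where "v = query_op (zb a) \<psi>"
    have lza: "length (za a) = m" and lzb: "length (zb a) = m"
      unfolding za_def zb_def m_def by simp_all
    have bina: "bin (take k (za a)) = a" "bin (take k (zb a)) = a"
      unfolding za_def zb_def using a by (simp_all add: bin_enc n_def)
    have ya: "ADDR k (za a)" unfolding ADDR_def using bina a by (simp add: za_def)
    have nb: "\<not> ADDR k (zb a)" unfolding ADDR_def using bina a by (simp add: zb_def)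
    have ca: "if ADDR k (za a) then accept_prob m c d \<psi> P (za a) \<ge> 2/3
                 else 1 - accept_prob m c d \<psi> P (za a) \<ge> 2/3" using corr lza by blast
    have cb: "if ADDR k (zb a) then accept_prob m c d \<psi> P (zb a) \<ge> 2/3
                 else 1 - accept_prob m c d \<psi> P (zb a) \<ge> 2/3" using corr lzb by blast
    have pa: "accept_prob m c d \<psi> P (za a) \<ge> 2/3" using ca ya by simp
    have pb: "1 - accept_prob m c d \<psi> P (zb a) \<ge> 2/3" using cb nb by simp
    define A where "A = NN B (apply_op B P u)"
    define V where "V = NN B (apply_op B P v)"
    define D where "D = NN B (\<lambda>x. u x - v x)"
    have A2: "2/3 \<le> A\<^sup>2" using pa unfolding A_def accept_prob_def sqnorm_NN u_def B_def .
    have V2: "V\<^sup>2 \<le> 1/3" using pb unfolding V_def accept_prob_def sqnorm_NN v_def B_def by simp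
    have "apply_op B P u = (\<lambda>x. apply_op B P v x + apply_op B P (\<lambda>y. u y - v y) x)"
      using apply_op_diff[of B P u _ v] by (auto simp: algebra_simps)
    then have "A \<le> V + NN B (apply_op B P (\<lambda>y. u y - v y))"
      unfolding A_def V_def by (simp add: NN_triangle)
    also have "NN B (apply_op B P (\<lambda>y. u y - v y)) \<le> D"
      unfolding D_def by (rule proj_contract[OF finB pr[folded B_def]])
    finally have AVD: "A \<le> V + D" by simp
    have "D\<^sup>2 = (\<Sum>x\<in>B. (cmod (u x - v x))\<^sup>2)"
      using sqnorm_NN[of B "\<lambda>x. u x - v x"] unfolding sqnorm_def D_def by simp
    also have "\<dots> \<le> (\<Sum>x\<in>B. (if hit a (fst x) then 1 else 0) * (2 * (cmod (u x))\<^sup>2 + 2 * (cmod (v x))\<^sup>2))"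
    proof (rule sum_mono)
      fix x assume "x \<in> B"
      show "(cmod (u x - v x))\<^sup>2 \<le> (if hit a (fst x) then 1 else 0) * (2 * (cmod (u x))\<^sup>2 + 2 * (cmod (v x))\<^sup>2)"
      proof (cases "hit a (fst x)")
        case True then show ?thesis using sq_diff_le by simp
      next
        case False
        obtain Ss b w where xe: "x = (Ss, b, w)" by (cases x)
        have "G (za a) Ss = G (zb a) Ss" using False xe unfolding hit_def by simp
        then have eq: "map (\<lambda>S. AND_S S (za a)) Ss = map (\<lambda>S. AND_S S (zb a)) Ss"
          unfolding G_def .
        have "u x = v x" unfolding u_def v_def query_op_def xe prod.case eq by (rule refl)
        then show ?thesis by simp
      qed
    qed
    also have "\<dots> = 2 * (\<Sum>x\<in>B. (if hit a (fst x) then 1 else 0) * (cmod (u x))\<^sup>2)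
                    + 2 * (\<Sum>x\<in>B. (if hit a (fst x) then 1 else 0) * (cmod (v x))\<^sup>2)"
      by (simp add: sum.distrib sum_distrib_left algebra_simps)
    also have "\<dots> = 4 * W a"
      unfolding W_def u_def v_def B_def
      using reindex_query[where F="\<lambda>Ss. if hit a Ss then 1 else 0" and m=m and c=c and d=d and z="za a" and \<psi>=\<psi>]
            reindex_query[where F="\<lambda>Ss. if hit a Ss then 1 else 0" and m=m and c=c and d=d and z="zb a" and \<psi>=\<psi>]
      by simp
    finally have D2: "D\<^sup>2 \<le> 4 * W a" .
    show ?thesis
      by (rule arith_final[of A V D]) (use A2 V2 AVD D2 in \<open>auto simp: A_def V_def D_def NN_def\<close>)
  qed
  have "real n / 100 = (\<Sum>a<n. 1/100)" by simp
  also have "\<dots> \<le> (\<Sum>a<n. W a)" by (rule sum_mono) (rule Wlow, simp)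
  also have "\<dots> \<le> real c" by (rule Wsum)
  finally show ?thesis unfolding n_def by simp
qed

lemma map2_xor_repl: "length b = length z \<Longrightarrow>
   (map2 (\<lambda>x y. x = (\<not> y)) b z = replicate (length z) False) = (b = z)"
proof (induction b arbitrary: z)
  case Nil then show ?case by simp
next
  case (Cons x b) then show ?case by (cases z) auto
qed

lemma upper: "qnaadt_computes m f m"
proof -
  define Ss0 where "Ss0 = map (\<lambda>i. {i}) [0..<m]"
  define p :: qbasis where "p = (Ss0, replicate m False, 0)"
  define \<psi> :: "qbasis \<Rightarrow> complex" where "\<psi> x = (if x = p then 1 else 0)" for x
  define P :: "qbasis \<Rightarrow> qbasis \<Rightarrow> complex" where
    "P x y = (if x = y \<and> f (fst (snd x)) then 1 else 0)" for x y
  define B where "B = qbasis_set m m 1"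
  have finB: "finite B" unfolding B_def by (rule finite_qbasis)
  have Ss0B: "length Ss0 = m" "\<forall>S\<in>set Ss0. S \<subseteq> {..<m}" unfolding Ss0_def by auto
  have pB: "p \<in> B" unfolding p_def B_def qbasis_set_def using Ss0B by auto
  have n1: "sqnorm B \<psi> = 1"
  proof -
    have "sqnorm B \<psi> = (\<Sum>x\<in>B. if x = p then 1 else 0)"
      unfolding sqnorm_def \<psi>_def by (rule sum.cong) auto
    also have "\<dots> = 1" using finB pB by simp
    finally show ?thesis .
  qed
  have prj: "is_projector B P"
    unfolding is_projector_def
  proof (intro conjI ballI)
    fix x y assume "x \<in> B" "y \<in> B"
    show "P x y = cnj (P y x)" unfolding P_def by auto
  next
    fix x y assume x: "x \<in> B" and y: "y \<in> B"
    have "(\<Sum>k\<in>B. P x k * P k y) = (\<Sum>k\<in>B. if k = x then P x y else 0)"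
      by (rule sum.cong) (auto simp: P_def)
    also have "\<dots> = P x y" using finB x by simp
    finally show "(\<Sum>k\<in>B. P x k * P k y) = P x y" .
  qed
  have acc: "accept_prob m m 1 \<psi> P z = (if f z then 1 else 0)" if lz: "length z = m" for z
  proof -
    define q :: qbasis where "q = (Ss0, z, 0)"
    have qB: "q \<in> B" unfolding q_def B_def qbasis_set_def using Ss0B lz by auto
    have "map (\<lambda>S. AND_S S z) Ss0 = map (\<lambda>i. z ! i) [0..<length z]"
      unfolding Ss0_def AND_S_def using lz by simp
    then have Gz: "map (\<lambda>S. AND_S S z) Ss0 = z" by (simp add: map_nth)
    have Q: "query_op z \<psi> x = (if x = q then 1 else 0)" if x: "x \<in> B" for x
    proof -
      obtain Ss b w where xe: "x = (Ss, b, w)" by (cases x)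
      have lb: "length b = m" and lSs: "length Ss = m" and w: "w < 1"
        using x unfolding xe B_def qbasis_set_def by auto
      show ?thesis
      proof (cases "Ss = Ss0")
        case True
        have "query_op z \<psi> x = (if map2 (\<lambda>x y. x = (\<not> y)) b z = replicate m False \<and> w = 0 then 1 else 0)"
          unfolding query_op_def xe \<psi>_def p_def True using Gz by simp
        also have "\<dots> = (if x = q then 1 else 0)"
          using map2_xor_repl[of b z] lb lz w unfolding xe q_def True by auto
        finally show ?thesis .
      next
        case False
        then show ?thesis unfolding query_op_def xe \<psi>_def p_def q_def by simp
      qed
    qed
    have AQ: "apply_op B P (query_op z \<psi>) x = P x q" for x
    proof -
      have "apply_op B P (query_op z \<psi>) x = (\<Sum>y\<in>B. if y = q then P x q else 0)"
        unfolding apply_op_def by (rule sum.cong) (auto simp: Q)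
      also have "\<dots> = P x q" using finB qB by simp
      finally show ?thesis .
    qed
    have "accept_prob m m 1 \<psi> P z = (\<Sum>x\<in>B. (cmod (P x q))\<^sup>2)"
      unfolding accept_prob_def B_def[symmetric] sqnorm_def AQ ..
    also have "\<dots> = (\<Sum>x\<in>B. if x = q then (if f z then 1 else 0) else 0)"
      by (rule sum.cong) (auto simp: P_def q_def)
    also have "\<dots> = (if f z then 1 else 0)" using finB qB by simp
    finally show ?thesis .
  qed
  show ?thesis
    unfolding qnaadt_computes_def
    by (rule exI[of _ 1], rule exI[of _ \<psi>], rule exI[of _ P])
       (use n1 prj acc in \<open>auto simp: B_def\<close>)
qed

theorem claimA2:
  shows "\<exists>c1>0. \<exists>c2>0. \<forall>k\<ge>1.
           c1 * real (2^k) \<le> real (QNAADT (k + 2^k) (ADDR k)) \<and>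
           real (QNAADT (k + 2^k) (ADDR k)) \<le> c2 * real (2^k)"
proof -
  have main: "1/100 * real (2^k) \<le> real (QNAADT (k + 2^k) (ADDR k)) \<and>
           real (QNAADT (k + 2^k) (ADDR k)) \<le> 2 * real (2^k)" if k1: "1 \<le> k" for k
  proof
    have up: "qnaadt_computes (k + 2^k) (ADDR k) (k + 2^k)" by (rule upper)
    have le: "QNAADT (k + 2^k) (ADDR k) \<le> k + 2^k"
      unfolding QNAADT_def by (rule Least_le) (rule up)
    have cq: "qnaadt_computes (k + 2^k) (ADDR k) (QNAADT (k + 2^k) (ADDR k))"
      unfolding QNAADT_def by (rule LeastI) (rule up)
    have lo: "real (2^k) \<le> 100 * real (QNAADT (k + 2^k) (ADDR k))" by (rule lower[OF cq])
    have "k < 2^k" by (rule less_exp)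
    then have "k + 2^k \<le> 2 * 2^k" by simp
    with le have "QNAADT (k + 2^k) (ADDR k) \<le> 2 * 2^k" by linarith
    then have "real (QNAADT (k + 2^k) (ADDR k)) \<le> real (2 * 2^k)"
      by (simp only: of_nat_le_iff)
    then show "real (QNAADT (k + 2^k) (ADDR k)) \<le> 2 * real (2^k)" by simp
    show "1/100 * real (2^k) \<le> real (QNAADT (k + 2^k) (ADDR k))" using lo by simp
  qed
  have "(1/100::real) > 0" "(2::real) > 0" by simp_all
  then show ?thesis using main by blast
qed

end
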